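(* Define integer matrices $(a(i,j))_{i,j\ge1}$ and $(b(i,j))_{i,j\ge1}$ as follows. The first three rows are (entries listed for $j=1,2,\dots$; all further entries in these rows are $0$): \begin{itemize} \item $a(1,\cdot)=(10,-36,27)$; $a(2,\cdot)=(-8,306,-2160,5508,-5832,2187)$; $a(3,\cdot)=(1,-360,10566,-99144,423549,-944784,1141614,-708588,177147)$; \item $b(1,\cdot)=(-9,252,-891,729)$; $b(2,\cdot)=(1,-378,8613,-54675,138510,-150903,59049)$; $b(3,\cdot)=(0,147,-14553,312255,-2617839,10764414,-23914845,29288304,-18600435,4782969)$. \end{itemize} For $i\ge4$ and $j\ge1$, both $m=a$ and $m=b$ satisfy $$m(i,j)=30m(i-1,j-1)-108m(i-1,j-2)+81m(i-1,j-3)-12m(i-2,j-1)+9m(i-2,j-2)+m(i-3,j-1),$$ with $m(i,j)=0$ whenever $j\le0$. Define integer sequences $d_\alpha=(d_\alpha(j))_{j\ge1}$ for $\alpha\ge1$ by $d_1=(9,0,0,\dots)$ and, for $\alpha\ge2$, $d_\alpha(j)=\sum_{k\ge1}a(k,j)d_{\alpha-1}(k)$ if $\alpha$ is even and $d_\alpha(j)=\sum_{k\ge1}b(k,j)d_{\alpha-1}(k)$ if $\alpha$ is odd. Then for all $\alpha\ge1$ and $j\ge1$, $$\pi(d_{2\alpha-1}(j))\ge 2\alpha+\left\lfloor\frac{2j-2}{3}\right\rfloor.$$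
   Context: For an integer $n$, $\pi(n)$ denotes the $3$-adic order of $n$, with the convention $\pi(0)=\infty$. $\lfloor x\rfloor$ is the largest integer not exceeding $x$. All sums defining $d_\alpha(j)$ are finite. *)

theory Defs
  imports Main "HOL-Library.Extended_Nat" "HOL-Computational_Algebra.Primes"
begin

definition rowval :: "int list \<Rightarrow> nat \<Rightarrow> int" where
  "rowval xs j = (if 1 \<le> j \<and> j \<le> length xs then xs ! (j - 1) else 0)"

text \<open>Matrix with given first three rows and the recurrence for i >= 4.
  Indices are naturals; column 0 (and row 0) is 0, so m(i,j)=0 for j<=0 is
  realised by truncated subtraction landing on column 0.\<close>
fun recmat :: "int list \<Rightarrow> int list \<Rightarrow> int list \<Rightarrow> nat \<Rightarrow> nat \<Rightarrow> int" where
  "recmat r1 r2 r3 0 j = 0"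
| "recmat r1 r2 r3 (Suc 0) j = rowval r1 j"
| "recmat r1 r2 r3 (Suc (Suc 0)) j = rowval r2 j"
| "recmat r1 r2 r3 (Suc (Suc (Suc 0))) j = rowval r3 j"
| "recmat r1 r2 r3 (Suc (Suc (Suc (Suc n)))) j =
     (if j = 0 then 0 else
        30 * recmat r1 r2 r3 (Suc (Suc (Suc n))) (j - 1)
      - 108 * recmat r1 r2 r3 (Suc (Suc (Suc n))) (j - 2)
      + 81 * recmat r1 r2 r3 (Suc (Suc (Suc n))) (j - 3)
      - 12 * recmat r1 r2 r3 (Suc (Suc n)) (j - 1)
      + 9 * recmat r1 r2 r3 (Suc (Suc n)) (j - 2)
      + recmat r1 r2 r3 (Suc n) (j - 1))"

definition amat :: "nat \<Rightarrow> nat \<Rightarrow> int" where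
  "amat = recmat [10, -36, 27]
                 [-8, 306, -2160, 5508, -5832, 2187]
                 [1, -360, 10566, -99144, 423549, -944784, 1141614, -708588, 177147]"

definition bmat :: "nat \<Rightarrow> nat \<Rightarrow> int" where
  "bmat = recmat [-9, 252, -891, 729]
                 [1, -378, 8613, -54675, 138510, -150903, 59049]
                 [0, 147, -14553, 312255, -2617839, 10764414, -23914845, 29288304, -18600435, 4782969]"

text \<open>The sequences d_alpha (alpha >= 1, entries j >= 1). The (finite) sum over k >= 1
  is taken over the nonzero terms.\<close>
fun dseq :: "nat \<Rightarrow> nat \<Rightarrow> int" where
  "dseq 0 j = 0"
| "dseq (Suc 0) j = (if j = 1 then 9 else 0)"
| "dseq (Suc (Suc n)) j =
     (let M = (if even (Suc (Suc n)) then amat else bmat) in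
      \<Sum>k \<in> {k. 1 \<le> k \<and> M k j * dseq (Suc n) k \<noteq> 0}. M k j * dseq (Suc n) k)"

definition pi3 :: "int \<Rightarrow> enat" where
  "pi3 x = (if x = 0 then \<infinity> else enat (multiplicity (3::int) x))"

end

theory Submission
  imports Defs
begin

definition G :: "nat \<Rightarrow> nat \<Rightarrow> nat" where
  "G l k = (3 * k - (l + 1)) div 2"

lemma recmat_col0: "recmat r1 r2 r3 i 0 = 0"
  by (induction r1 r2 r3 i "0::nat" rule: recmat.induct) (auto simp: rowval_def)

lemma dvd_t:
  assumes "(3::int) ^ e dvd x" "n \<le> e + t"
  shows "(3::int) ^ n dvd (3 ^ t * u) * x"
proof -
  have "(3::int) ^ n dvd 3 ^ (e + t)" using assms(2) by (simp add: le_imp_power_dvd)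
  also have "\<dots> dvd (3 ^ t * u) * x" using assms(1)
    by (metis dvd_mult_left mult.commute mult_dvd_mono power_add dvd_refl)
  finally show ?thesis .
qed

lemma recmat_G:
  assumes r1: "\<And>k. (3::int) ^ G 1 k dvd rowval r1 k"
      and r2: "\<And>k. (3::int) ^ G 2 k dvd rowval r2 k"
      and r3: "\<And>k. (3::int) ^ G 3 k dvd rowval r3 k"
  shows "(3::int) ^ G i k dvd recmat r1 r2 r3 i k"
proof (induction i arbitrary: k rule: less_induct)
  case (less i)
  consider "i = 0" | "i = 1" | "i = 2" | "i = 3" | n where "i = Suc (Suc (Suc (Suc n)))"
    by (metis One_nat_def Suc_1 numeral_3_eq_3 not0_implies_Suc)
  then show ?case
  proof cases
    case 5
    let ?R = "recmat r1 r2 r3"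
    show ?thesis
    proof (cases "k = 0")
      case True then show ?thesis using 5 by simp
    next
      case k: False
      have IH: "\<And>m k. m < i \<Longrightarrow> (3::int) ^ G m k dvd ?R m k" using less by blast
      have t1: "(3::int) ^ G i k dvd (3 ^ 1 * 10) * ?R (Suc (Suc (Suc n))) (k - 1)"
        by (rule dvd_t[OF IH]) (use 5 k in \<open>auto simp: G_def\<close>)
      have t2: "(3::int) ^ G i k dvd (3 ^ 3 * 4) * ?R (Suc (Suc (Suc n))) (k - 2)"
      proof (cases "k < 2")
        case True then have "k - 2 = 0" by simp
        then show ?thesis by (simp add: recmat_col0)
      next
        case False show ?thesis
          by (rule dvd_t[OF IH]) (use 5 False in \<open>auto simp: G_def\<close>)
      qed
      have t3: "(3::int) ^ G i k dvd (3 ^ 4 * 1) * ?R (Suc (Suc (Suc n))) (k - 3)"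
      proof (cases "k < 3")
        case True then have "k - 3 = 0" by simp
        then show ?thesis by (simp add: recmat_col0)
      next
        case False show ?thesis
          by (rule dvd_t[OF IH]) (use 5 False in \<open>auto simp: G_def\<close>)
      qed
      have t4: "(3::int) ^ G i k dvd (3 ^ 1 * 4) * ?R (Suc (Suc n)) (k - 1)"
        by (rule dvd_t[OF IH]) (use 5 k in \<open>auto simp: G_def\<close>)
      have t5: "(3::int) ^ G i k dvd (3 ^ 2 * 1) * ?R (Suc (Suc n)) (k - 2)"
      proof (cases "k < 2")
        case True then have "k - 2 = 0" by simp
        then show ?thesis by (simp add: recmat_col0)
      next
        case False show ?thesis
          by (rule dvd_t[OF IH]) (use 5 False in \<open>auto simp: G_def\<close>)
      qed
      have t6: "(3::int) ^ G i k dvd (3 ^ 0 * 1) * ?R (Suc n) (k - 1)"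
        by (rule dvd_t[OF IH]) (use 5 k in \<open>auto simp: G_def\<close>)
      have "(3::int) ^ G i k dvd
          30 * ?R (Suc (Suc (Suc n))) (k - 1) - 108 * ?R (Suc (Suc (Suc n))) (k - 2)
        + 81 * ?R (Suc (Suc (Suc n))) (k - 3) - 12 * ?R (Suc (Suc n)) (k - 1)
        + 9 * ?R (Suc (Suc n)) (k - 2) + ?R (Suc n) (k - 1)"
        using t1 t2 t3 t4 t5 t6
        by (intro dvd_add dvd_diff) simp_all
      then show ?thesis using 5 k by simp
    qed
  qed (use r1 r2 r3 in \<open>auto simp: numeral_2_eq_2 numeral_3_eq_3\<close>)
qed


definition ff :: "nat \<Rightarrow> nat" where
  "ff j = (2 * j - 2) div 3"

definition HH :: "nat \<Rightarrow> nat" where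
  "HH k = (3 * k - 3) div 2 + (if k = 2 then 1 else 0)"

lemma rowval_cases:
  assumes "\<And>k. 1 \<le> k \<Longrightarrow> k \<le> length xs \<Longrightarrow> Q k (xs ! (k - 1))" "\<And>k. Q k 0"
  shows "Q k (rowval xs k)"
  using assms by (auto simp: rowval_def)

lemma rowA1: "(3::int) ^ G 1 k dvd rowval [10, -36, 27] k"
  apply (rule rowval_cases[where Q="\<lambda>k x. (3::int) ^ G 1 k dvd x"])
  subgoal premises p for k
  proof -
    have "k \<in> {1,2,3}" using p by (auto; presburger)
    then show ?thesis by (auto simp: G_def HH_def ff_def)
  qed
  by simp

lemma rowA2: "(3::int) ^ G 2 k dvd rowval [-8, 306, -2160, 5508, -5832, 2187] k"
  apply (rule rowval_cases[where Q="\<lambda>k x. (3::int) ^ G 2 k dvd x"])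
  subgoal premises p for k
  proof -
    have "k \<in> {1,2,3,4,5,6}" using p by (auto; presburger)
    then show ?thesis by (auto simp: G_def HH_def ff_def)
  qed
  by simp

lemma rowA3: "(3::int) ^ G 3 k dvd rowval [1, -360, 10566, -99144, 423549, -944784, 1141614, -708588, 177147] k"
  apply (rule rowval_cases[where Q="\<lambda>k x. (3::int) ^ G 3 k dvd x"])
  subgoal premises p for k
  proof -
    have "k \<in> {1,2,3,4,5,6,7,8,9}" using p by (auto; presburger)
    then show ?thesis by (auto simp: G_def HH_def ff_def)
  qed
  by simp

lemma rowB1: "(3::int) ^ G 1 k dvd rowval [-9, 252, -891, 729] k"
  apply (rule rowval_cases[where Q="\<lambda>k x. (3::int) ^ G 1 k dvd x"])
  subgoal premises p for k
  proof -
    have "k \<in> {1,2,3,4}" using p by (auto; presburger)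
    then show ?thesis by (auto simp: G_def HH_def ff_def)
  qed
  by simp

lemma rowB2: "(3::int) ^ G 2 k dvd rowval [1, -378, 8613, -54675, 138510, -150903, 59049] k"
  apply (rule rowval_cases[where Q="\<lambda>k x. (3::int) ^ G 2 k dvd x"])
  subgoal premises p for k
  proof -
    have "k \<in> {1,2,3,4,5,6,7}" using p by (auto; presburger)
    then show ?thesis by (auto simp: G_def HH_def ff_def)
  qed
  by simp

lemma rowB3: "(3::int) ^ G 3 k dvd rowval [0, 147, -14553, 312255, -2617839, 10764414, -23914845, 29288304, -18600435, 4782969] k"
  apply (rule rowval_cases[where Q="\<lambda>k x. (3::int) ^ G 3 k dvd x"])
  subgoal premises p for k
  proof -
    have "k \<in> {1,2,3,4,5,6,7,8,9,10}" using p by (auto; presburger)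
    then show ?thesis by (auto simp: G_def HH_def ff_def)
  qed
  by simp

lemma amat_G: "(3::int) ^ G i k dvd amat i k"
  unfolding amat_def by (rule recmat_G) (rule rowA1 rowA2 rowA3)+

lemma bmat_G: "(3::int) ^ G i k dvd bmat i k"
  unfolding bmat_def by (rule recmat_G) (rule rowB1 rowB2 rowB3)+

lemma amat_rows: "amat 1 k = rowval [10, -36, 27] k" "amat 2 k = rowval [-8, 306, -2160, 5508, -5832, 2187] k" "amat 3 k = rowval [1, -360, 10566, -99144, 423549, -944784, 1141614, -708588, 177147] k"
  by (simp_all add: amat_def numeral_2_eq_2 numeral_3_eq_3)

lemma bmat_rows: "bmat 1 k = rowval [-9, 252, -891, 729] k" "bmat 2 k = rowval [1, -378, 8613, -54675, 138510, -150903, 59049] k" "bmat 3 k = rowval [0, 147, -14553, 312255, -2617839, 10764414, -23914845, 29288304, -18600435, 4782969] k"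
  by (simp_all add: bmat_def numeral_2_eq_2 numeral_3_eq_3)

lemma Arow1: "(3::int) ^ HH k dvd (3 ^ ff 1 * 1) * rowval [10, -36, 27] k"
  apply (rule rowval_cases[where Q="\<lambda>k x. (3::int) ^ HH k dvd (3 ^ ff 1 * 1) * x"])
  subgoal premises p for k
  proof -
    have "k \<in> {1,2,3}" using p by (auto; presburger)
    then show ?thesis by (auto simp: G_def HH_def ff_def)
  qed
  by simp

lemma Arow2: "(3::int) ^ HH k dvd (3 ^ ff 2 * 1) * rowval [-8, 306, -2160, 5508, -5832, 2187] k"
  apply (rule rowval_cases[where Q="\<lambda>k x. (3::int) ^ HH k dvd (3 ^ ff 2 * 1) * x"])
  subgoal premises p for k
  proof -
    have "k \<in> {1,2,3,4,5,6}" using p by (auto; presburger)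
    then show ?thesis by (auto simp: G_def HH_def ff_def)
  qed
  by simp

lemma Arow3: "(3::int) ^ HH k dvd (3 ^ ff 3 * 1) * rowval [1, -360, 10566, -99144, 423549, -944784, 1141614, -708588, 177147] k"
  apply (rule rowval_cases[where Q="\<lambda>k x. (3::int) ^ HH k dvd (3 ^ ff 3 * 1) * x"])
  subgoal premises p for k
  proof -
    have "k \<in> {1,2,3,4,5,6,7,8,9}" using p by (auto; presburger)
    then show ?thesis by (auto simp: G_def HH_def ff_def)
  qed
  by simp

lemma Brow1: "(3::int) ^ (2 + ff j) dvd (3 ^ HH 1 * 1) * rowval [-9, 252, -891, 729] j"
  apply (rule rowval_cases[where Q="\<lambda>j x. (3::int) ^ (2 + ff j) dvd (3 ^ HH 1 * 1) * x"])
  subgoal premises p for j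
  proof -
    have "j \<in> {1,2,3,4}" using p by (auto; presburger)
    then show ?thesis by (auto simp: G_def HH_def ff_def)
  qed
  by simp

lemma Brow2: "(3::int) ^ (2 + ff j) dvd (3 ^ HH 2 * 1) * rowval [1, -378, 8613, -54675, 138510, -150903, 59049] j"
  apply (rule rowval_cases[where Q="\<lambda>j x. (3::int) ^ (2 + ff j) dvd (3 ^ HH 2 * 1) * x"])
  subgoal premises p for j
  proof -
    have "j \<in> {1,2,3,4,5,6,7}" using p by (auto; presburger)
    then show ?thesis by (auto simp: G_def HH_def ff_def)
  qed
  by simp

lemma Brow3: "(3::int) ^ (2 + ff j) dvd (3 ^ HH 3 * 1) * rowval [0, 147, -14553, 312255, -2617839, 10764414, -23914845, 29288304, -18600435, 4782969] j"
  apply (rule rowval_cases[where Q="\<lambda>j x. (3::int) ^ (2 + ff j) dvd (3 ^ HH 3 * 1) * x"])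
  subgoal premises p for j
  proof -
    have "j \<in> {1,2,3,4,5,6,7,8,9,10}" using p by (auto; presburger)
    then show ?thesis by (auto simp: G_def HH_def ff_def)
  qed
  by simp

lemma d2: "2 * (x div 2) \<le> (x::nat)" "x \<le> 2 * (x div 2) + 1" by linarith+
lemma d3: "3 * (x div 3) \<le> (x::nat)" "x \<le> 3 * (x div 3) + 2" by linarith+
lemma a1: "(l::nat) \<ge> 4 \<Longrightarrow> (3 * k - 3) div 2 + (if k = 2 then 1 else 0) \<le> (3 * k - (l + 1)) div 2 + (2 * l - 2) div 3"
  using d2[of "3 * k - 3"] d2[of "3 * k - (l + 1)"] d3[of "2 * l - 2"]
  by (cases "l = 4"; cases "k = 2"; simp; arith)
lemma a2: "(k::nat) \<ge> 4 \<Longrightarrow> 1 \<le> j \<Longrightarrow> 2 + (2 * j - 2) div 3 \<le> (3 * j - (k + 1)) div 2 + ((3 * k - 3) div 2 + (if k = 2 then 1 else 0))"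
  using d2[of "3 * j - (k + 1)"] d2[of "3 * k - 3"] d3[of "2 * j - 2"]
  by simp arith

lemma lemA:
  assumes "1 \<le> l"
  shows "(3::int) ^ HH k dvd (3 ^ ff l * 1) * amat l k"
proof -
  consider "l = 1" | "l = 2" | "l = 3" | "l \<ge> 4" using assms by linarith
  then show ?thesis
  proof cases
    case 4
    have "HH k \<le> G l k + ff l" using a1[OF 4, of k] unfolding HH_def G_def ff_def by simp
    then show ?thesis by (rule dvd_t[OF amat_G])
  qed (use Arow1 Arow2 Arow3 amat_rows in auto)
qed

lemma lemB:
  assumes "1 \<le> k" "1 \<le> j"
  shows "(3::int) ^ (2 + ff j) dvd (3 ^ HH k * 1) * bmat k j"
proof -
  consider "k = 1" | "k = 2" | "k = 3" | "k \<ge> 4" using assms by linarith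
  then show ?thesis
  proof cases
    case 4
    have "2 + ff j \<le> G k j + HH k" using a2[OF 4 assms(2)] unfolding HH_def G_def ff_def by simp
    then show ?thesis by (rule dvd_t[OF bmat_G])
  qed (use Brow1 Brow2 Brow3 bmat_rows in auto)
qed

lemma main:
  "1 \<le> j \<Longrightarrow> (3::int) ^ (2 * (m + 1) + ff j) dvd dseq (Suc (2 * m)) j"
proof (induction m arbitrary: j)
  case 0
  then show ?case by (cases "j = 1") (auto simp: ff_def)
next
  case (Suc m)
  have ev: "(3::int) ^ (2 * (m + 1) + HH k) dvd dseq (Suc (Suc (2 * m))) k" if k: "1 \<le> k" for k
  proof -
    have eq: "dseq (Suc (Suc (2 * m))) k =
      (\<Sum>l\<in>{l. 1 \<le> l \<and> amat l k * dseq (Suc (2 * m)) l \<noteq> 0}. amat l k * dseq (Suc (2 * m)) l)"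
    proof -
      have "even (Suc (Suc (2 * m)))" by simp
      then show ?thesis by (simp only: dseq.simps(3) Let_def if_True)
    qed
    show ?thesis unfolding eq
    proof (rule dvd_sum)
      fix l assume "l \<in> {l. 1 \<le> l \<and> amat l k * dseq (Suc (2 * m)) l \<noteq> 0}"
      then have l: "1 \<le> l" by simp
      obtain t where t: "dseq (Suc (2 * m)) l = 3 ^ (2 * (m + 1) + ff l) * t"
        using Suc.IH[OF l] by (auto elim: dvdE)
      have "(3::int) ^ (2 * (m + 1) + HH k) dvd 3 ^ (2 * (m + 1)) * ((3 ^ ff l * 1) * amat l k) * t"
        using lemA[OF l, of k] by (simp add: power_add mult_dvd_mono)
      also have "3 ^ (2 * (m + 1)) * ((3 ^ ff l * 1) * amat l k) * t = amat l k * dseq (Suc (2 * m)) l"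
        by (simp only: t) (simp add: power_add algebra_simps)
      finally show "(3::int) ^ (2 * (m + 1) + HH k) dvd amat l k * dseq (Suc (2 * m)) l" .
    qed
  qed
  have eq: "dseq (Suc (2 * Suc m)) j =
      (\<Sum>k\<in>{k. 1 \<le> k \<and> bmat k j * dseq (Suc (Suc (2 * m))) k \<noteq> 0}. bmat k j * dseq (Suc (Suc (2 * m))) k)"
  proof -
    have s: "Suc (2 * Suc m) = Suc (Suc (Suc (2 * m)))" by simp
    have "\<not> even (Suc (Suc (Suc (2 * m))))" by simp
    then show ?thesis unfolding s by (simp only: dseq.simps(3) Let_def if_False)
  qed
  show ?case unfolding eq
  proof (rule dvd_sum)
    fix k assume "k \<in> {k. 1 \<le> k \<and> bmat k j * dseq (Suc (Suc (2 * m))) k \<noteq> 0}"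
    then have k: "1 \<le> k" by simp
    obtain t where t: "dseq (Suc (Suc (2 * m))) k = 3 ^ (2 * (m + 1) + HH k) * t"
      using ev[OF k] by (auto elim: dvdE)
    have "(3::int) ^ (2 * (m + 1) + (2 + ff j)) dvd 3 ^ (2 * (m + 1)) * ((3 ^ HH k * 1) * bmat k j) * t"
    proof -
      have "(3::int) ^ (2 * (m + 1)) * 3 ^ (2 + ff j) dvd 3 ^ (2 * (m + 1)) * ((3 ^ HH k * 1) * bmat k j)"
        by (rule mult_dvd_mono[OF dvd_refl lemB[OF k Suc.prems]])
      then have "(3::int) ^ (2 * (m + 1)) * 3 ^ (2 + ff j) dvd 3 ^ (2 * (m + 1)) * ((3 ^ HH k * 1) * bmat k j) * t"
        by (rule dvd_mult2)
      then show ?thesis by (simp only: power_add)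
    qed
    also have "3 ^ (2 * (m + 1)) * ((3 ^ HH k * 1) * bmat k j) * t = bmat k j * dseq (Suc (Suc (2 * m))) k"
      by (simp only: t) (simp add: power_add algebra_simps)
    finally have X: "(3::int) ^ (2 * (m + 1) + (2 + ff j)) dvd bmat k j * dseq (Suc (Suc (2 * m))) k" .
    have eqx: "2 * (Suc m + 1) + ff j = 2 * (m + 1) + (2 + ff j)" by simp
    show "(3::int) ^ (2 * (Suc m + 1) + ff j) dvd bmat k j * dseq (Suc (Suc (2 * m))) k"
      unfolding eqx by (rule X)
  qed
qed

theorem theorem3p3:
  fixes \<alpha> j :: nat
  assumes "\<alpha> \<ge> 1" and "j \<ge> 1"
  shows "pi3 (dseq (2 * \<alpha> - 1) j) \<ge> enat (2 * \<alpha> + (2 * j - 2) div 3)"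
proof -
  obtain m where m: "\<alpha> = Suc m" using assms(1) by (cases \<alpha>) auto
  have e: "2 * \<alpha> - 1 = Suc (2 * m)" "2 * \<alpha> + (2 * j - 2) div 3 = 2 * (m + 1) + ff j"
    using m by (auto simp: ff_def)
  have d: "(3::int) ^ (2 * (m + 1) + ff j) dvd dseq (Suc (2 * m)) j" using main assms(2) by blast
  show ?thesis
  proof (cases "dseq (Suc (2 * m)) j = 0")
    case True then show ?thesis unfolding e pi3_def by simp
  next
    case False
    have "2 * (m + 1) + ff j \<le> multiplicity (3::int) (dseq (Suc (2 * m)) j)"
      by (rule multiplicity_geI[OF False _ d]) simp
    then show ?thesis unfolding e pi3_def using False by simp
  qed
qed

end
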